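(* Consider the model and approximate SIR $\widetilde{\mathsf{SIR}}_L$ in the context with $\alpha=4$, $p=q=1$ and $L\ge2$. If $\beta<\frac{\gamma}{L-1}$, then $$\mathbb{P}\left(\widetilde{\mathsf{SIR}}_L\ge\frac{\beta}{\gamma}\right)=\int_0^{\sqrt{\frac{\gamma/\beta-(L-1)}{\pi\lambda}}}\left(1-\frac{1}{\sqrt{\gamma/\beta-\pi\lambda r^2+\frac{(L-2)^2}{4}}-\frac{L-2}{2}}\right)^{L-1}f_{R_L}(r)\,dr,$$ where $f_{R_L}(r)=e^{-\lambda\pi r^2}\frac{2(\lambda\pi r^2)^L}{r\,(L-1)!}$; and if $\beta\ge\frac{\gamma}{L-1}$ this probability is $0$.
   Context: Let $\Phi$ be a homogeneous Poisson point process on $\mathbb{R}^2$ of intensity $\lambda>0$ (base stations), user at the origin $o$; label points in increasing distance as $x_1,x_2,\dots$, $R_k=\|x_k\|$. Fix an integer $L\ge2$, $\alpha>2$, $\gamma>0$, $\beta>0$, $p\in[0,1]$, $q\in(0,1]$. Independently of $\Phi$ let $a_1,\dots,a_{L-1}$ be i.i.d. Bernoulli($p$), $\Omega=\sum_{i=1}^{L-1}a_i$; when $\Omega\ge1$, $\hat R_1$ is the smallest distance from $o$ among the $x_i$ with $i\le L-1$, $a_i=1$. Approximate SIR (dominant-interferer approximation, interference-limited): if $\Omega\ge1$, $$\widetilde{\mathsf{SIR}}_L=\frac{R_L^{-\alpha}}{\hat R_1^{-\alpha}+\frac{2(\Omega-1)}{2-\alpha}\cdot\frac{R_L^{2-\alpha}-\hat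 R_1^{2-\alpha}}{R_L^2-\hat R_1^2}+\frac{2\pi q\lambda}{\alpha-2}R_L^{2-\alpha}},$$ and if $\Omega=0$, $\widetilde{\mathsf{SIR}}_L=\frac{R_L^{-\alpha}}{\frac{2\pi q\lambda}{\alpha-2}R_L^{2-\alpha}}$. *)

theory Defs
  imports "HOL-Probability.Probability"
begin

text \<open>Homogeneous Poisson point process on the plane (real \<times> real, Euclidean norm),
  modelled as a random locally finite set of points \<Phi> \<omega> (a simple point process)
  on a probability space M, with Poisson(\<lambda>|A|) counts on bounded Borel sets and
  independent counts on disjoint bounded Borel sets.\<close>

definition poisson_pp :: "'w measure \<Rightarrow> real \<Rightarrow> ('w \<Rightarrow> (real \<times> real) set) \<Rightarrow> bool" where
  "poisson_pp M lam Phi \<longleftrightarrow>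
     prob_space M \<and>
     (\<forall>\<omega>\<in>space M. \<forall>A. bounded A \<longrightarrow> finite (Phi \<omega> \<inter> A)) \<and>
     (\<forall>A \<in> sets lborel. bounded A \<longrightarrow>
        (\<lambda>\<omega>. card (Phi \<omega> \<inter> A)) \<in> measurable M (count_space UNIV) \<and>
        (\<forall>k::nat. measure M {\<omega> \<in> space M. card (Phi \<omega> \<inter> A) = k}
            = (lam * measure lborel A) ^ k / fact k * exp (- (lam * measure lborel A)))) \<and>
     (\<forall>(I::nat set) (A::nat \<Rightarrow> (real \<times> real) set). finite I \<longrightarrow> disjoint_family_on A I \<longrightarrow>
        (\<forall>i\<in>I. A i \<in> sets lborel \<and> bounded (A i)) \<longrightarrow>
        prob_space.indep_vars M (\<lambda>_. count_space UNIV) (\<lambda>i \<omega>. card (Phi \<omega> \<inter> A i)) I)"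

definition kth_dist :: "(real \<times> real) set \<Rightarrow> nat \<Rightarrow> real" where
  "kth_dist S k = Inf {r. 0 \<le> r \<and> k \<le> card (S \<inter> cball 0 r)}"

text \<open>Approximate SIR (dominant interferer approximation) for general parameters, given
  \<Omega> (number of active among the L-1 closest BSs), hat R_1 and R_L.\<close>
definition sir_approx :: "real \<Rightarrow> real \<Rightarrow> real \<Rightarrow> nat \<Rightarrow> real \<Rightarrow> real \<Rightarrow> real" where
  "sir_approx \<alpha> q lam \<Omega> hR1 RL =
     (if \<Omega> \<ge> 1 then
        RL powr (-\<alpha>) /
          (hR1 powr (-\<alpha>)
           + 2 * (real \<Omega> - 1) / (2 - \<alpha>) * ((RL powr (2 - \<alpha>) - hR1 powr (2 - \<alpha>)) / (RL^2 - hR1^2))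
           + 2 * pi * q * lam / (\<alpha> - 2) * RL powr (2 - \<alpha>))
      else RL powr (-\<alpha>) / (2 * pi * q * lam / (\<alpha> - 2) * RL powr (2 - \<alpha>)))"

end

theory Submission
  imports Defs
begin


lemma kth_char:
  fixes S :: "(real \<times> real) set"
  assumes fin: "\<And>A. bounded A \<Longrightarrow> finite (S \<inter> A)"
    and n0: "0 \<le> n0" "k \<le> card (S \<inter> cball 0 n0)"
  shows "0 \<le> kth_dist S k"
    and "\<And>r. 0 \<le> r \<Longrightarrow> kth_dist S k \<le> r \<longleftrightarrow> k \<le> card (S \<inter> cball 0 r)"
proof -
  define T where "T = {r. 0 \<le> r \<and> k \<le> card (S \<inter> cball 0 r)}"
  have kd: "kth_dist S k = Inf T" by (simp add: kth_dist_def T_def)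
  have mono: "card (S \<inter> cball 0 r) \<le> card (S \<inter> cball 0 r')" if "r \<le> r'" for r r'
    using that by (intro card_mono fin) auto
  have ne: "T \<noteq> {}" using n0 by (auto simp: T_def)
  have bdd: "bdd_below T" by (auto simp: T_def bdd_below_def)
  have s0: "0 \<le> Inf T" using ne by (intro cInf_greatest) (auto simp: T_def)
  then show "0 \<le> kth_dist S k" by (simp add: kd)
  define s where "s = Inf T"
  have ks: "k \<le> card (S \<inter> cball 0 s)"
  proof (rule ccontr)
    assume nk: "\<not> k \<le> card (S \<inter> cball 0 s)"
    define F where "F = S \<inter> cball 0 (s+1)"
    have fF: "finite F" unfolding F_def by (intro fin) auto
    define D where "D = norm ` {x\<in>F. s < norm x}"
    have fD: "finite D" using fF by (simp add: D_def)
    define m where "m = (if D = {} then s+1 else Min D)"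
    have sm: "s < m" using fD by (auto simp: m_def D_def)
    have eq: "S \<inter> cball 0 r = S \<inter> cball 0 s" if "s \<le> r" "r < m" for r
    proof safe
      fix x assume x: "x \<in> S" "x \<in> cball 0 r"
      show "x \<in> cball 0 s"
      proof (rule ccontr)
        assume "x \<notin> cball 0 s"
        then have "s < norm x" by auto
        moreover have "norm x \<le> r" using x by auto
        moreover have "r < s + 1"
          using that fD by (auto simp: m_def split: if_splits dest!: Min_in)
             (smt (verit, ccfv_SIG) D_def Min_in empty_iff fD image_iff mem_Collect_eq F_def mem_cball_0 IntE)
        ultimately have "norm x \<in> D" using x by (auto simp: D_def F_def)
        then have "m \<le> norm x" using fD by (auto simp: m_def)
        with \<open>norm x \<le> r\<close> \<open>r < m\<close> show False by simp
      qed
    qed (use that in auto)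
    obtain t where t: "t \<in> T" "t < m" using cInf_less_iff[OF ne bdd] sm unfolding s_def by auto
    have "s \<le> t" unfolding s_def using t bdd by (intro cInf_lower)
    with t eq[of t] nk show False by (auto simp: T_def)
  qed
  fix r :: real assume r: "0 \<le> r"
  show "kth_dist S k \<le> r \<longleftrightarrow> k \<le> card (S \<inter> cball 0 r)"
  proof
    assume "kth_dist S k \<le> r"
    then have "s \<le> r" by (simp add: kd s_def)
    then show "k \<le> card (S \<inter> cball 0 r)" using ks mono[of s r] by simp
  next
    assume "k \<le> card (S \<inter> cball 0 r)"
    then have "r \<in> T" using r by (simp add: T_def)
    then show "kth_dist S k \<le> r" using bdd by (simp add: kd cInf_lower)
  qed
qed

lemma kth_empty:
  assumes "\<And>r. 0 \<le> r \<Longrightarrow> card (S \<inter> cball 0 r) < k"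
  shows "kth_dist S k = Inf {}"
proof -
  have e: "{r. 0 \<le> r \<and> k \<le> card (S \<inter> cball 0 r)} = {}" using assms by force
  show ?thesis unfolding kth_dist_def e ..
qed

lemma measure_cball2: "0 \<le> r \<Longrightarrow> measure lborel (cball (0::real\<times>real) r) = pi * r^2"
  by (simp add: content_cball unit_ball_vol_2 power2_eq_square)


definition pois :: "real \<Rightarrow> nat \<Rightarrow> real" where
  "pois \<mu> k = \<mu>^k / fact k * exp (- \<mu>)"

locale ppsetup =
  fixes M :: "'w measure" and lam :: real and Phi :: "'w \<Rightarrow> (real \<times> real) set" and L :: nat
  assumes ppp: "poisson_pp M lam Phi" and lam_pos: "0 < lam" and L2: "2 \<le> L"
begin

sublocale prob_space M using ppp by (simp add: poisson_pp_def)

lemma fin: "\<omega> \<in> space M \<Longrightarrow> bounded A \<Longrightarrow> finite (Phi \<omega> \<inter> A)"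
  using ppp by (simp add: poisson_pp_def)

lemma cnt_meas: "A \<in> sets borel \<Longrightarrow> bounded A \<Longrightarrow> (\<lambda>\<omega>. card (Phi \<omega> \<inter> A)) \<in> measurable M (count_space UNIV)"
  using ppp by (simp add: poisson_pp_def)

lemma cnt_ev: "A \<in> sets borel \<Longrightarrow> bounded A \<Longrightarrow> {\<omega>\<in>space M. Q (card (Phi \<omega> \<inter> A))} \<in> sets M"
proof -
  assume a: "A \<in> sets borel" "bounded A"
  have "{\<omega>\<in>space M. Q (card (Phi \<omega> \<inter> A))} = (\<lambda>\<omega>. card (Phi \<omega> \<inter> A)) -` {n. Q n} \<inter> space M" by auto
  also have "\<dots> \<in> sets M" by (rule measurable_sets[OF cnt_meas[OF a]]) simp
  finally show ?thesis .
qed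

lemma cnt_dist: "A \<in> sets borel \<Longrightarrow> bounded A \<Longrightarrow>
   prob {\<omega>\<in>space M. card (Phi \<omega> \<inter> A) = k} = pois (lam * measure lborel A) k"
  using ppp by (simp add: poisson_pp_def pois_def)

lemma cnt_less: assumes "A \<in> sets borel" "bounded A"
  shows "prob {\<omega>\<in>space M. card (Phi \<omega> \<inter> A) < m} = (\<Sum>k<m. pois (lam * measure lborel A) k)"
proof (induction m)
  case 0 then show ?case by simp
next
  case (Suc m)
  have "{\<omega>\<in>space M. card (Phi \<omega> \<inter> A) < Suc m} = {\<omega>\<in>space M. card (Phi \<omega> \<inter> A) < m} \<union> {\<omega>\<in>space M. card (Phi \<omega> \<inter> A) = m}"
    by auto
  then have "prob {\<omega>\<in>space M. card (Phi \<omega> \<inter> A) < Suc m} = prob {\<omega>\<in>space M. card (Phi \<omega> \<inter> A) < m} + prob {\<omega>\<in>space M. card (Phi \<omega> \<inter> A) = m}"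
    using cnt_ev[OF assms] by (auto intro!: finite_measure_Union)
  then show ?case using Suc cnt_dist[OF assms] by simp
qed

lemma cnt_ge: assumes "A \<in> sets borel" "bounded A"
  shows "prob {\<omega>\<in>space M. m \<le> card (Phi \<omega> \<inter> A)} = 1 - (\<Sum>k<m. pois (lam * measure lborel A) k)"
proof -
  have "{\<omega>\<in>space M. m \<le> card (Phi \<omega> \<inter> A)} = space M - {\<omega>\<in>space M. card (Phi \<omega> \<inter> A) < m}" by auto
  then show ?thesis using cnt_less[OF assms] cnt_ev[OF assms] by (simp add: prob_compl)
qed

definition NB :: "real \<Rightarrow> 'w \<Rightarrow> nat" where "NB r \<omega> = card (Phi \<omega> \<inter> cball 0 r)"
definition R :: "nat \<Rightarrow> 'w \<Rightarrow> real" where "R k \<omega> = kth_dist (Phi \<omega>) k"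
definition U :: "nat \<Rightarrow> 'w \<Rightarrow> real" where "U k \<omega> = lam * pi * (R k \<omega>)^2"
definition Z :: "'w set" where "Z = {\<omega>\<in>space M. \<forall>n::nat. NB (real n) \<omega> < L}"
definition rad :: "real \<Rightarrow> real" where "rad c = sqrt (c / (lam * pi))"

lemma cball_sets[simp]: "cball (0::real\<times>real) r \<in> sets borel" by (simp add: borel_closed)

lemma NB_ev: "{\<omega>\<in>space M. Q (NB r \<omega>)} \<in> sets M"
  unfolding NB_def by (rule cnt_ev) auto

lemma NB_mono: "\<omega> \<in> space M \<Longrightarrow> r \<le> r' \<Longrightarrow> NB r \<omega> \<le> NB r' \<omega>"
  unfolding NB_def by (intro card_mono fin) auto

lemma rad_sq: "0 \<le> c \<Longrightarrow> lam * (pi * (rad c)^2) = c"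
  using lam_pos by (simp add: rad_def)

lemma rad_nonneg: "0 \<le> rad c \<longleftrightarrow> 0 \<le> c"
  proof -
  have "0 < lam*pi" using lam_pos by simp
  then show ?thesis by (auto simp: rad_def zero_le_divide_iff)
qed

lemma rad_mono: "c \<le> c' \<Longrightarrow> rad c \<le> rad c'"
  using lam_pos by (simp add: rad_def divide_right_mono)

lemma NB_dist: "0 \<le> r \<Longrightarrow> prob {\<omega>\<in>space M. NB r \<omega> < m} = (\<Sum>k<m. pois (lam * pi * r^2) k)"
  unfolding NB_def by (subst cnt_less) (auto simp: measure_cball2 mult.assoc)

lemma Z_sets: "Z \<in> sets M"
proof -
  have "Z = (\<Inter>n. {\<omega>\<in>space M. NB (real n) \<omega> < L})" using Z_def by auto
  also have "\<dots> \<in> sets M" using NB_ev by auto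
  finally show ?thesis .
qed

lemma Z_null: "Z \<in> null_sets M"
proof -
  let ?c = "\<lambda>n::nat. lam * pi * (real n)^2"
  have lim: "(\<lambda>n. \<Sum>k<L. pois (?c n) k) \<longlonglongrightarrow> (\<Sum>k<L. 0)"
  proof (intro tendsto_sum)
    fix k
    have "filterlim (\<lambda>n::nat. (real n)^2) at_top sequentially"
      by (intro filterlim_pow_at_top filterlim_real_sequentially) simp
    then have c: "filterlim ?c at_top sequentially" using lam_pos
      by (intro filterlim_tendsto_pos_mult_at_top[OF tendsto_const]) auto
    have "((\<lambda>x::real. x ^ k / exp x) \<longlongrightarrow> 0) at_top" by (rule tendsto_power_div_exp_0)
    then have "((\<lambda>n. ?c n ^ k / exp (?c n)) \<longlonglongrightarrow> 0)" by (rule filterlim_compose[OF _ c])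
    then have "((\<lambda>n. (?c n ^ k / exp (?c n)) / fact k) \<longlonglongrightarrow> 0 / fact k)" by (intro tendsto_intros) auto
    then show "(\<lambda>n. pois (?c n) k) \<longlonglongrightarrow> 0" by (simp add: pois_def exp_minus field_simps)
  qed
  have "prob Z \<le> 0"
  proof (rule LIMSEQ_le_const[OF lim[simplified]])
    show "\<exists>N. \<forall>n\<ge>N. prob Z \<le> (\<Sum>k<L. pois (?c n) k)"
    proof (intro exI allI impI)
      fix n :: nat
      have "prob Z \<le> prob {\<omega>\<in>space M. NB (real n) \<omega> < L}"
        using NB_ev by (intro finite_measure_mono) (auto simp: Z_def)
      then show "prob Z \<le> (\<Sum>k<L. pois (?c n) k)" by (simp add: NB_dist)
    qed
  qed
  then show ?thesis using Z_sets measure_nonneg[of M Z] by (auto simp: null_sets_def emeasure_eq_measure)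
qed

lemma R_char:
  assumes \<omega>: "\<omega> \<in> space M - Z" and k: "k \<le> L"
  shows "0 \<le> R k \<omega>" "\<And>r. 0 \<le> r \<Longrightarrow> R k \<omega> \<le> r \<longleftrightarrow> k \<le> NB r \<omega>"
proof -
  obtain n::nat where n: "L \<le> NB n \<omega>" using \<omega> by (auto simp: Z_def not_less)
  have fin': "\<And>A. bounded A \<Longrightarrow> finite (Phi \<omega> \<inter> A)" using \<omega> fin by auto
  have "k \<le> card (Phi \<omega> \<inter> cball 0 (real n))" using n k by (simp add: NB_def)
  note kc = kth_char[OF fin' _ this]
  show "0 \<le> R k \<omega>" using kc(1) by (simp add: R_def)
  fix r :: real assume "0 \<le> r" then show "R k \<omega> \<le> r \<longleftrightarrow> k \<le> NB r \<omega>"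
    using kc(2) by (simp add: R_def NB_def)
qed

lemma U_le:
  assumes \<omega>: "\<omega> \<in> space M - Z" and k: "k \<le> L" and c: "0 \<le> c"
  shows "U k \<omega> \<le> c \<longleftrightarrow> k \<le> NB (rad c) \<omega>"
proof -
  have r0: "0 \<le> R k \<omega>" using R_char[OF \<omega> k] by simp
  have "U k \<omega> \<le> c \<longleftrightarrow> (R k \<omega>)^2 \<le> c / (lam * pi)"
    using lam_pos by (simp add: U_def pos_le_divide_eq mult.commute)
  also have "\<dots> \<longleftrightarrow> sqrt ((R k \<omega>)^2) \<le> rad c" unfolding rad_def by (rule real_sqrt_le_iff[symmetric])
  also have "\<dots> \<longleftrightarrow> R k \<omega> \<le> rad c" using r0 by simp
  also have "\<dots> \<longleftrightarrow> k \<le> NB (rad c) \<omega>" using R_char(2)[OF \<omega> k] rad_nonneg c by simp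
  finally show ?thesis .
qed

lemma U_nonneg: "0 \<le> U k \<omega>" using lam_pos by (simp add: U_def)

lemma Emp_bound:
  assumes "\<omega> \<in> space M" "\<forall>n::nat. NB (real n) \<omega> < k"
  shows "kth_dist (Phi \<omega>) k = Inf {}"
proof (rule kth_empty)
  fix r :: real assume r: "0 \<le> r"
  have "NB r \<omega> \<le> NB (real (nat \<lceil>r\<rceil>)) \<omega>" by (rule NB_mono[OF assms(1) real_nat_ceiling_ge])
  also have "\<dots> < k" using assms(2) by blast
  finally show "card (Phi \<omega> \<inter> cball 0 r) < k" by (simp add: NB_def)
qed

lemma R_meas: "R k \<in> borel_measurable M"
proof (rule borel_measurable_iff_le[THEN iffD2], intro allI)
  fix a :: real
  define Emp where "Emp = {\<omega>\<in>space M. \<forall>n::nat. NB (real n) \<omega> < k}"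
  have Emp: "Emp \<in> sets M"
  proof -
    have "Emp = (\<Inter>n. {\<omega>\<in>space M. NB (real n) \<omega> < k})" using Emp_def by auto
    also have "\<dots> \<in> sets M" using NB_ev by auto
    finally show ?thesis .
  qed
  have c1: "R k \<omega> \<le> a \<longleftrightarrow> 0 \<le> a \<and> k \<le> NB a \<omega>" if \<omega>: "\<omega> \<in> space M" "\<omega> \<notin> Emp" for \<omega>
  proof -
    obtain n::nat where n: "k \<le> NB n \<omega>" using \<omega> by (auto simp: Emp_def not_less)
    have fin': "\<And>A. bounded A \<Longrightarrow> finite (Phi \<omega> \<inter> A)" using \<omega> fin by auto
    have "k \<le> card (Phi \<omega> \<inter> cball 0 (real n))" using n by (simp add: NB_def)
    note kc = kth_char[OF fin' _ this]
    show ?thesis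
    proof (cases "0 \<le> a")
      case True then show ?thesis using kc(2)[of a] by (simp add: R_def NB_def)
    next
      case False then show ?thesis using kc(1) by (simp add: R_def)
    qed
  qed
  have c2: "R k \<omega> = Inf {}" if \<omega>: "\<omega> \<in> Emp" for \<omega>
    using \<omega> unfolding R_def Emp_def by (intro Emp_bound) auto
  have c3: "\<not> k \<le> NB a \<omega>" if \<omega>: "\<omega> \<in> Emp" "0 \<le> a" for \<omega>
  proof -
    have "NB a \<omega> \<le> NB (real (nat \<lceil>a\<rceil>)) \<omega>" using \<omega> unfolding Emp_def
      by (intro NB_mono real_nat_ceiling_ge) blast
    also have "\<dots> < k" using \<omega> unfolding Emp_def by blast
    finally show ?thesis by simp
  qed
  have eq: "{\<omega>\<in>space M. R k \<omega> \<le> a} = {\<omega>\<in>space M. 0 \<le> a \<and> k \<le> NB a \<omega>} \<union> (if Inf {} \<le> a then Emp else {})"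
  proof (rule set_eqI)
    fix \<omega>
    show "\<omega> \<in> {\<omega>\<in>space M. R k \<omega> \<le> a} \<longleftrightarrow> \<omega> \<in> {\<omega>\<in>space M. 0 \<le> a \<and> k \<le> NB a \<omega>} \<union> (if Inf {} \<le> a then Emp else {})"
    proof (cases "\<omega> \<in> space M")
      case False then show ?thesis by (simp add: Emp_def)
    next
      case sp: True
      show ?thesis
      proof (cases "\<omega> \<in> Emp")
        case True
        then have "R k \<omega> = Inf {}" by (rule c2)
        moreover have "\<not> (0 \<le> a \<and> k \<le> NB a \<omega>)" using c3[OF True] by auto
        ultimately show ?thesis using sp True by simp
      next
        case False
        have "\<omega> \<notin> (if Inf {} \<le> a then Emp else {})" using False by simp
        then show ?thesis using sp c1[OF sp False] by simp
      qed
    qed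
  qed
  have "{\<omega>\<in>space M. 0 \<le> a \<and> k \<le> NB a \<omega>} \<in> sets M"
    using NB_ev[of "\<lambda>n. 0 \<le> a \<and> k \<le> n" a] by (simp only:)
  then show "{\<omega>\<in>space M. R k \<omega> \<le> a} \<in> sets M" unfolding eq using Emp
    by (cases "Inf {} \<le> a") (simp_all only: if_True if_False sets.Un sets.empty_sets Un_empty_right)
qed

lemma U_meas: "U k \<in> borel_measurable M"
  unfolding U_def[abs_def] using R_meas by measurable

end


definition Fcdf :: "nat \<Rightarrow> real \<Rightarrow> real \<Rightarrow> real" where
  "Fcdf L a b = exp (- max a 0) * erlang_CDF (L - 1) 1 (b - max a 0)"

lemma erlang_pois: "0 \<le> \<mu> \<Longrightarrow> 1 \<le> L \<Longrightarrow> erlang_CDF (L - 1) 1 \<mu> = 1 - (\<Sum>k<L. pois \<mu> k)"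
proof -
  assume "0 \<le> \<mu>" "1 \<le> L"
  then have "{..L-1} = {..<L}" by auto
  then show ?thesis using \<open>0 \<le> \<mu>\<close> by (simp add: erlang_CDF_def pois_def)
qed

context ppsetup
begin

lemma prob_eqZ:
  assumes "A \<in> sets M" "B \<in> sets M" "\<And>\<omega>. \<omega> \<in> space M - Z \<Longrightarrow> \<omega> \<in> A \<longleftrightarrow> \<omega> \<in> B"
  shows "prob A = prob B"
proof -
  have "A - Z = B - Z" using assms sets.sets_into_space[OF assms(1)] sets.sets_into_space[OF assms(2)] by blast
  then show ?thesis using measure_Diff_null_set[OF assms(1) Z_null] measure_Diff_null_set[OF assms(2) Z_null] by simp
qed

lemma ann_meas: assumes "0 \<le> ra" "ra \<le> rb"
  shows "measure lborel (cball (0::real\<times>real) rb - cball 0 ra) = pi * rb^2 - pi * ra^2"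
proof -
  have "emeasure lborel (cball (0::real\<times>real) rb) \<noteq> \<infinity>" using assms by (simp add: emeasure_cball)
  then have "measure lborel (cball (0::real\<times>real) rb - cball 0 ra) = measure lborel (cball (0::real\<times>real) rb) - measure lborel (cball (0::real\<times>real) ra)"
    using assms by (intro measure_Diff) auto
  then show ?thesis using assms by (simp add: measure_cball2)
qed

lemma ann_bdd: "bounded (cball (0::real\<times>real) rb - cball 0 ra)"
  by (rule bounded_subset[OF bounded_cball[of 0 rb]]) auto

lemma ann_sets: "cball (0::real\<times>real) rb - cball 0 ra \<in> sets borel"
  by (intro sets.Diff) auto

lemma indep_clause: "\<forall>(I::nat set) (A::nat \<Rightarrow> (real \<times> real) set). finite I \<longrightarrow> disjoint_family_on A I \<longrightarrow>
        (\<forall>i\<in>I. A i \<in> sets lborel \<and> bounded (A i)) \<longrightarrow>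
        indep_vars (\<lambda>_. count_space UNIV) (\<lambda>i \<omega>. card (Phi \<omega> \<inter> A i)) I"
  using ppp unfolding poisson_pp_def by (elim conjE) assumption

lemma indep2:
  assumes "0 \<le> ra" "ra \<le> rb"
  shows "prob {\<omega>\<in>space M. card (Phi \<omega> \<inter> cball 0 ra) = 0 \<and> L \<le> card (Phi \<omega> \<inter> (cball 0 rb - cball 0 ra))}
    = prob {\<omega>\<in>space M. card (Phi \<omega> \<inter> cball 0 ra) = 0} * prob {\<omega>\<in>space M. L \<le> card (Phi \<omega> \<inter> (cball 0 rb - cball 0 ra))}"
proof -
  define A :: "nat \<Rightarrow> (real\<times>real) set" where "A = (\<lambda>i. if i = 0 then cball 0 ra else cball 0 rb - cball 0 ra)"
  define S :: "nat \<Rightarrow> nat set" where "S = (\<lambda>i. if i = 0 then {0} else {n. L \<le> n})"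
  have disj: "disjoint_family_on A {0,1}" by (auto simp: disjoint_family_on_def A_def)
  have AA: "\<forall>i\<in>{0::nat,1}. A i \<in> sets lborel \<and> bounded (A i)"
    by (auto simp: A_def intro: bounded_subset[OF bounded_cball])
  have ind: "indep_vars (\<lambda>_. count_space UNIV) (\<lambda>i \<omega>. card (Phi \<omega> \<inter> A i)) {0::nat,1}"
    using indep_clause disj AA by simp
  have "prob (\<Inter>i\<in>{0::nat,1}. (\<lambda>\<omega>. card (Phi \<omega> \<inter> A i)) -` S i \<inter> space M) = (\<Prod>i\<in>{0::nat,1}. prob ((\<lambda>\<omega>. card (Phi \<omega> \<inter> A i)) -` S i \<inter> space M))"
    by (rule indep_varsD[OF ind]) auto
  moreover have "(\<Inter>i\<in>{0::nat,1}. (\<lambda>\<omega>. card (Phi \<omega> \<inter> A i)) -` S i \<inter> space M) =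
     {\<omega>\<in>space M. card (Phi \<omega> \<inter> cball 0 ra) = 0 \<and> L \<le> card (Phi \<omega> \<inter> (cball 0 rb - cball 0 ra))}"
    by (auto simp: A_def S_def)
  moreover have "(\<lambda>\<omega>. card (Phi \<omega> \<inter> A 0)) -` S 0 \<inter> space M = {\<omega>\<in>space M. card (Phi \<omega> \<inter> cball 0 ra) = 0}"
    by (auto simp: A_def S_def)
  moreover have "(\<lambda>\<omega>. card (Phi \<omega> \<inter> A 1)) -` S 1 \<inter> space M = {\<omega>\<in>space M. L \<le> card (Phi \<omega> \<inter> (cball 0 rb - cball 0 ra))}"
    by (auto simp: A_def S_def)
  ultimately show ?thesis by simp
qed

lemma U_meas'[measurable]: "U k \<in> borel_measurable M" by (rule U_meas)

lemma cdf_prob: "prob {\<omega>\<in>space M. a < U 1 \<omega> \<and> U L \<omega> \<le> b} = Fcdf L a b"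
proof -
  have E1: "{\<omega>\<in>space M. a < U 1 \<omega> \<and> U L \<omega> \<le> b} \<in> sets M" by measurable
  have L1: "1 \<le> L" "(1::nat) \<le> L" using L2 by auto
  show ?thesis
  proof (cases "b < 0")
    case True
    have "\<not> U L \<omega> \<le> b" for \<omega> using True U_nonneg[of L \<omega>] by linarith
    then have e: "{\<omega>\<in>space M. a < U 1 \<omega> \<and> U L \<omega> \<le> b} = {}" by blast
    have "Fcdf L a b = 0" using True by (simp add: Fcdf_def erlang_CDF_def)
    then show ?thesis unfolding e by simp
  next
    case b0: False
    show ?thesis
    proof (cases "a < 0")
      case True
      have "prob {\<omega>\<in>space M. a < U 1 \<omega> \<and> U L \<omega> \<le> b} = prob {\<omega>\<in>space M. L \<le> NB (rad b) \<omega>}"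
      proof (rule prob_eqZ[OF E1 NB_ev])
        fix \<omega> assume \<omega>: "\<omega> \<in> space M - Z"
        show "\<omega> \<in> {\<omega>\<in>space M. a < U 1 \<omega> \<and> U L \<omega> \<le> b} \<longleftrightarrow> \<omega> \<in> {\<omega>\<in>space M. L \<le> NB (rad b) \<omega>}"
          using U_le[OF \<omega> order_refl, of b] b0 True U_nonneg[of 1 \<omega>] \<omega> by auto
      qed
      also have "\<dots> = 1 - (\<Sum>k<L. pois b k)"
      proof -
        have "prob {\<omega>\<in>space M. L \<le> NB (rad b) \<omega>} = 1 - (\<Sum>k<L. pois (lam * measure lborel (cball (0::real\<times>real) (rad b))) k)"
          unfolding NB_def by (rule cnt_ge) auto
        then show ?thesis using rad_sq[of b] b0 rad_nonneg[of b] by (simp add: measure_cball2)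
      qed
      also have "\<dots> = Fcdf L a b" using True b0 L1 erlang_pois[of b L] by (simp add: Fcdf_def)
      finally show ?thesis .
    next
      case a0: False
      show ?thesis
      proof (cases "b \<le> a")
        case True
        have "prob {\<omega>\<in>space M. a < U 1 \<omega> \<and> U L \<omega> \<le> b} = prob {}"
        proof (rule prob_eqZ[OF E1])
          fix \<omega> assume \<omega>: "\<omega> \<in> space M - Z"
          have m: "NB (rad b) \<omega> \<le> NB (rad a) \<omega>" using \<omega> True by (intro NB_mono rad_mono) auto
          show "\<omega> \<in> {\<omega>\<in>space M. a < U 1 \<omega> \<and> U L \<omega> \<le> b} \<longleftrightarrow> \<omega> \<in> {}"
            using U_le[OF \<omega> order_refl, of b] U_le[OF \<omega> L1(2), of a] b0 a0 m L2 by auto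
        qed auto
        moreover have "Fcdf L a b = 0"
        proof (cases "b = a")
          case True then show ?thesis using a0 by (simp add: Fcdf_def erlang_CDF_at0)
        next
          case False then show ?thesis using \<open>b \<le> a\<close> a0 by (simp add: Fcdf_def erlang_CDF_def)
        qed
        ultimately show ?thesis by simp
      next
        case ab: False
        define ra where "ra = rad a"
        define rb where "rb = rad b"
        have r: "0 \<le> ra" "ra \<le> rb" using a0 ab by (auto simp: ra_def rb_def rad_nonneg intro: rad_mono)
        have E2: "{\<omega>\<in>space M. card (Phi \<omega> \<inter> cball 0 ra) = 0 \<and> L \<le> card (Phi \<omega> \<inter> (cball 0 rb - cball 0 ra))} \<in> sets M"
        proof -
          have "{\<omega>\<in>space M. card (Phi \<omega> \<inter> cball 0 ra) = 0 \<and> L \<le> card (Phi \<omega> \<inter> (cball 0 rb - cball 0 ra))}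
             = {\<omega>\<in>space M. card (Phi \<omega> \<inter> cball 0 ra) = 0} \<inter> {\<omega>\<in>space M. L \<le> card (Phi \<omega> \<inter> (cball 0 rb - cball 0 ra))}" by auto
          also have "\<dots> \<in> sets M"
            by (intro sets.Int cnt_ev) (auto intro: bounded_subset[OF bounded_cball])
          finally show ?thesis .
        qed
        have "prob {\<omega>\<in>space M. a < U 1 \<omega> \<and> U L \<omega> \<le> b} = prob {\<omega>\<in>space M. card (Phi \<omega> \<inter> cball 0 ra) = 0 \<and> L \<le> card (Phi \<omega> \<inter> (cball 0 rb - cball 0 ra))}"
        proof (rule prob_eqZ[OF E1 E2])
          fix \<omega> assume \<omega>: "\<omega> \<in> space M - Z"
          have f1: "finite (Phi \<omega> \<inter> cball 0 ra)" "finite (Phi \<omega> \<inter> (cball 0 rb - cball 0 ra))"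
            using \<omega> fin ann_bdd by auto
          have "Phi \<omega> \<inter> cball 0 rb = (Phi \<omega> \<inter> cball 0 ra) \<union> (Phi \<omega> \<inter> (cball 0 rb - cball 0 ra))"
            using r by auto
          then have sp: "NB rb \<omega> = NB ra \<omega> + card (Phi \<omega> \<inter> (cball 0 rb - cball 0 ra))"
            unfolding NB_def using f1 by (simp add: card_Un_disjoint Int_Diff_disjoint inf_assoc disjoint_iff)
          show "\<omega> \<in> {\<omega>\<in>space M. a < U 1 \<omega> \<and> U L \<omega> \<le> b} \<longleftrightarrow> \<omega> \<in> {\<omega>\<in>space M. card (Phi \<omega> \<inter> cball 0 ra) = 0 \<and> L \<le> card (Phi \<omega> \<inter> (cball 0 rb - cball 0 ra))}"
            using U_le[OF \<omega> order_refl, of b] U_le[OF \<omega> L1(2), of a] b0 a0 sp \<omega>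
            by (auto simp: ra_def rb_def NB_def)
        qed
        also have "\<dots> = prob {\<omega>\<in>space M. card (Phi \<omega> \<inter> cball 0 ra) = 0} * prob {\<omega>\<in>space M. L \<le> card (Phi \<omega> \<inter> (cball 0 rb - cball 0 ra))}"
          by (rule indep2[OF r])
        also have "prob {\<omega>\<in>space M. card (Phi \<omega> \<inter> cball 0 ra) = 0} = exp (-a)"
          using cnt_dist[of "cball 0 ra" 0] r rad_sq[of a] a0 by (simp add: measure_cball2 pois_def ra_def)
        also have "prob {\<omega>\<in>space M. L \<le> card (Phi \<omega> \<inter> (cball 0 rb - cball 0 ra))} = 1 - (\<Sum>k<L. pois (b - a) k)"
        proof -
          have "prob {\<omega>\<in>space M. L \<le> card (Phi \<omega> \<inter> (cball 0 rb - cball 0 ra))} = 1 - (\<Sum>k<L. pois (lam * measure lborel (cball (0::real\<times>real) rb - cball 0 ra)) k)"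
            by (rule cnt_ge) (auto intro: bounded_subset[OF bounded_cball])
          moreover have "lam * measure lborel (cball (0::real\<times>real) rb - cball 0 ra) = b - a"
            using ann_meas[OF r] rad_sq[of a] rad_sq[of b] a0 ab by (simp add: ra_def rb_def right_diff_distrib)
          ultimately show ?thesis by simp
        qed
        also have "exp (-a) * (1 - (\<Sum>k<L. pois (b - a) k)) = Fcdf L a b"
          using a0 ab L1 erlang_pois[of "b - a" L] by (simp add: Fcdf_def)
        finally show ?thesis .
      qed
    qed
  qed
qed

end


definition Dn :: "nat \<Rightarrow> real \<times> real \<Rightarrow> real" where
  "Dn L p = (if 0 < fst p \<and> fst p < snd p then (snd p - fst p)^(L-2) / fact (L-2) * exp (- snd p) else 0)"

lemma Dn_nonneg: "0 \<le> Dn L p" by (simp add: Dn_def)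

lemma Dn_meas_pair[measurable]: "Dn L \<in> borel_measurable (lborel \<Otimes>\<^sub>M lborel)"
  unfolding Dn_def[abs_def] by measurable

lemma Dn_meas[measurable]: "Dn L \<in> borel_measurable borel"
  using Dn_meas_pair[of L] by (simp add: lborel_prod)

lemma inner_int:
  fixes c v e :: real
  assumes "c \<le> v" "0 \<le> e"
  shows "(\<integral>\<^sup>+u. ennreal ((v-u)^m / fact m * e) * indicator {c<..<v} u \<partial>lborel) = ennreal ((v-c)^(Suc m) / fact (Suc m) * e)"
proof -
  define F where "F = (\<lambda>u::real. - ((v-u)^(Suc m) / fact (Suc m) * e))"
  have "AE u in lborel. u \<noteq> c" "AE u in lborel. u \<noteq> v" by (rule AE_lborel_singleton)+
  then have "AE u in lborel. ennreal ((v-u)^m / fact m * e) * indicator {c<..<v} u = ennreal ((v-u)^m / fact m * e) * indicator {c..v} u"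
    by eventually_elim (auto split: split_indicator)
  then have "(\<integral>\<^sup>+u. ennreal ((v-u)^m / fact m * e) * indicator {c<..<v} u \<partial>lborel) = (\<integral>\<^sup>+u. ennreal ((v-u)^m / fact m * e) * indicator {c..v} u \<partial>lborel)"
    by (rule nn_integral_cong_AE)
  also have "\<dots> = ennreal (F v - F c)"
  proof (rule nn_integral_FTC_Icc)
    show "(\<lambda>u. (v-u)^m / fact m * e) \<in> borel_measurable borel" by measurable
    fix x assume "x \<in> {c..v}"
    then show "0 \<le> (v-x)^m / fact m * e" using assms by simp
    have "(F has_real_derivative
        (- (real (Suc m) * (v-x)^m * (- 1)) / fact (Suc m) * e)) (at x)"
      unfolding F_def by (auto intro!: derivative_eq_intros simp del: power_Suc)
    moreover have "(- (real (Suc m) * (v-x)^m * (- 1)) / fact (Suc m) * e) = (v-x)^m / fact m * e"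
      by (simp add: field_simps del: of_nat_Suc)
    ultimately show "(F has_real_derivative (v-x)^m / fact m * e) (at x)" by simp
  qed (use assms in auto)
  also have "\<dots> = ennreal ((v-c)^(Suc m) / fact (Suc m) * e)" by (simp add: F_def)
  finally show ?thesis .
qed

lemma sets_pair_borel: "A \<in> sets (lborel \<Otimes>\<^sub>M lborel) \<Longrightarrow> (A :: (real\<times>real) set) \<in> sets borel"
  unfolding lborel_prod by simp

lemma dens_S:
  assumes L2: "2 \<le> L"
  shows "emeasure (density lborel (\<lambda>p. ennreal (Dn L p))) {p. a < fst p \<and> snd p \<le> b} = ennreal (Fcdf L a b)"
proof -
  define a' where "a' = max a 0"
  define S where "S = {p::real\<times>real. a < fst p \<and> snd p \<le> b}"
  have "{p \<in> space (lborel \<Otimes>\<^sub>M lborel). a < fst p \<and> snd p \<le> b} \<in> sets (lborel \<Otimes>\<^sub>M lborel)" by measurable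
  then have Sp: "S \<in> sets (lborel \<Otimes>\<^sub>M lborel)" unfolding S_def by (simp add: space_pair_measure)
  have S: "S \<in> sets borel" using Sp by (rule sets_pair_borel)
  note Sp[measurable]
  have "emeasure (density lborel (\<lambda>p. ennreal (Dn L p))) S = (\<integral>\<^sup>+p. ennreal (Dn L p) * indicator S p \<partial>lborel)"
    using S by (intro emeasure_density) auto
  also have "\<dots> = (\<integral>\<^sup>+p. ennreal (Dn L p) * indicator S p \<partial>(lborel \<Otimes>\<^sub>M lborel))"
    by (simp add: lborel_prod)
  also have "\<dots> = (\<integral>\<^sup>+v. \<integral>\<^sup>+u. ennreal (Dn L (u,v)) * indicator S (u,v) \<partial>lborel \<partial>lborel)"
    using Sp by (intro lborel_pair.nn_integral_snd[symmetric]) measurable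
  also have "\<dots> = (\<integral>\<^sup>+v. ennreal (indicator {a'<..b} v * ((v-a')^(L-1) / fact (L-1) * exp (-v))) \<partial>lborel)"
  proof (rule nn_integral_cong)
    fix v :: real
    show "(\<integral>\<^sup>+u. ennreal (Dn L (u,v)) * indicator S (u,v) \<partial>lborel) = ennreal (indicator {a'<..b} v * ((v-a')^(L-1) / fact (L-1) * exp (-v)))"
    proof (cases "a' < v \<and> v \<le> b")
      case True
      have "\<And>u. ennreal (Dn L (u,v)) * indicator S (u,v) = ennreal ((v-u)^(L-2) / fact (L-2) * exp (-v)) * indicator {a'<..<v} u"
        using True by (auto simp: Dn_def S_def a'_def split: split_indicator)
      then have "(\<integral>\<^sup>+u. ennreal (Dn L (u,v)) * indicator S (u,v) \<partial>lborel) = (\<integral>\<^sup>+u. ennreal ((v-u)^(L-2) / fact (L-2) * exp (-v)) * indicator {a'<..<v} u \<partial>lborel)"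
        by simp
      also have "\<dots> = ennreal ((v-a')^(Suc (L-2)) / fact (Suc (L-2)) * exp (-v))"
        using True by (intro inner_int) auto
      also have "Suc (L-2) = L - 1" using L2 by simp
      finally show ?thesis using True by simp
    next
      case False
      have z: "\<And>u. ennreal (Dn L (u,v)) * indicator S (u,v) = 0"
        using False by (auto simp: Dn_def S_def a'_def split: split_indicator)
      have "(\<integral>\<^sup>+u. ennreal (Dn L (u,v)) * indicator S (u,v) \<partial>lborel) = 0"
        by (simp add: z)
      then show ?thesis using False by (simp add: indicator_def)
    qed
  qed
  also have "\<dots> = (\<integral>\<^sup>+x. ennreal (indicator {a'<..b} (a' + x) * ((a' + x - a')^(L-1) / fact (L-1) * exp (-(a' + x)))) \<partial>lborel)"
    using nn_integral_real_affine[of "\<lambda>v. ennreal (indicator {a'<..b} v * ((v-a')^(L-1) / fact (L-1) * exp (-v)))" 1 a'] by simp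
  also have "\<dots> = (\<integral>\<^sup>+x. ennreal (exp (-a')) * (ennreal (erlang_density (L-1) 1 x) * indicator {.. b - a'} x) \<partial>lborel)"
  proof (rule nn_integral_cong)
    fix x :: real
    show "ennreal (indicator {a'<..b} (a' + x) * ((a' + x - a')^(L-1) / fact (L-1) * exp (-(a' + x)))) =
      ennreal (exp (-a')) * (ennreal (erlang_density (L-1) 1 x) * indicator {.. b - a'} x)"
    proof (cases "0 < x")
      case True
      then show ?thesis
        by (auto simp: erlang_density_def indicator_def exp_add ennreal_mult'[symmetric] mult_ac exp_diff exp_minus field_simps)
    next
      case False
      have "erlang_density (L-1) 1 x = 0" using False L2 by (auto simp: erlang_density_def)
      then show ?thesis using False by (simp add: indicator_def)
    qed
  qed
  also have "\<dots> = ennreal (exp (-a')) * (\<integral>\<^sup>+x. ennreal (erlang_density (L-1) 1 x) * indicator {.. b - a'} x \<partial>lborel)"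
    by (rule nn_integral_cmult) auto
  also have "\<dots> = ennreal (exp (-a')) * ennreal (erlang_CDF (L-1) 1 (b - a'))"
    by (simp add: nn_integral_erlang_density)
  also have "\<dots> = ennreal (Fcdf L a b)"
    by (simp add: Fcdf_def a'_def ennreal_mult'[symmetric])
  finally show ?thesis by (simp add: S_def)
qed


lemma atMost_pair: "{..(a::real,b::real)} = {p. fst p \<le> a \<and> snd p \<le> b}"
  by (auto simp: less_eq_prod_def)

lemma sets_S: "{p::real\<times>real. a < fst p \<and> snd p \<le> b} \<in> sets borel"
proof -
  have "{p \<in> space (lborel \<Otimes>\<^sub>M lborel). a < fst p \<and> snd p \<le> b} \<in> sets (lborel \<Otimes>\<^sub>M lborel)" by measurable
  then show ?thesis by (intro sets_pair_borel) (simp add: space_pair_measure)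
qed

lemma sets_T: "{p::real\<times>real. snd p \<le> b} \<in> sets borel"
proof -
  have "{p \<in> space (lborel \<Otimes>\<^sub>M lborel). snd p \<le> b} \<in> sets (lborel \<Otimes>\<^sub>M lborel)" by measurable
  then show ?thesis by (intro sets_pair_borel) (simp add: space_pair_measure)
qed

lemma sets_A: "{p::real\<times>real. fst p \<le> a \<and> snd p \<le> b} \<in> sets borel"
proof -
  have "{p \<in> space (lborel \<Otimes>\<^sub>M lborel). fst p \<le> a \<and> snd p \<le> b} \<in> sets (lborel \<Otimes>\<^sub>M lborel)" by measurable
  then show ?thesis by (intro sets_pair_borel) (simp add: space_pair_measure)
qed

lemma split_emeasure:
  assumes "sets N = sets (borel :: (real\<times>real) measure)"
  shows "emeasure N {p. fst p \<le> a \<and> snd p \<le> b} + emeasure N {p. a < fst p \<and> snd p \<le> b} = emeasure N {p. snd p \<le> b}"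
proof -
  have "{p. fst p \<le> a \<and> snd p \<le> b} \<union> {p. a < fst p \<and> snd p \<le> b} = {p::real\<times>real. snd p \<le> b}" by auto
  moreover have "{p. fst p \<le> a \<and> snd p \<le> b} \<inter> {p. a < fst p \<and> snd p \<le> b} = ({}::(real\<times>real) set)" by auto
  moreover have "{p. fst p \<le> a \<and> snd p \<le> b} \<in> sets N" "{p. a < fst p \<and> snd p \<le> b} \<in> sets N"
    using assms sets_A sets_S by auto
  ultimately show ?thesis using plus_emeasure[of "{p. fst p \<le> a \<and> snd p \<le> b}" N "{p. a < fst p \<and> snd p \<le> b}"] by simp
qed

lemma dens_T: assumes "2 \<le> L"
  shows "emeasure (density lborel (\<lambda>p. ennreal (Dn L p))) {p. snd p \<le> b} = ennreal (Fcdf L (-1) b)"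
proof -
  have "emeasure (density lborel (\<lambda>p. ennreal (Dn L p))) {p. snd p \<le> b} = (\<integral>\<^sup>+p. ennreal (Dn L p) * indicator {p. snd p \<le> b} p \<partial>lborel)"
    using sets_T by (intro emeasure_density) auto
  also have "\<dots> = (\<integral>\<^sup>+p. ennreal (Dn L p) * indicator {p. -1 < fst p \<and> snd p \<le> b} p \<partial>lborel)"
    by (intro nn_integral_cong) (auto simp: Dn_def split: split_indicator)
  also have "\<dots> = emeasure (density lborel (\<lambda>p. ennreal (Dn L p))) {p. -1 < fst p \<and> snd p \<le> b}"
    using sets_S by (intro emeasure_density[symmetric]) auto
  also have "\<dots> = ennreal (Fcdf L (-1) b)" by (rule dens_S[OF assms])
  finally show ?thesis .
qed

context ppsetup
begin

definition X :: "'w \<Rightarrow> real \<times> real" where "X \<omega> = (U 1 \<omega>, U L \<omega>)"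

lemma X_meas: "X \<in> borel_measurable M"
proof -
  have "X \<in> measurable M (borel \<Otimes>\<^sub>M borel)" unfolding X_def[abs_def] by measurable
  then show ?thesis by (simp add: borel_prod)
qed

lemma distr_S: "emeasure (distr M borel X) {p. a < fst p \<and> snd p \<le> b} = ennreal (Fcdf L a b)"
proof -
  have "emeasure (distr M borel X) {p. a < fst p \<and> snd p \<le> b} = emeasure M (X -` {p. a < fst p \<and> snd p \<le> b} \<inter> space M)"
    using sets_S X_meas by (intro emeasure_distr) auto
  also have "X -` {p. a < fst p \<and> snd p \<le> b} \<inter> space M = {\<omega>\<in>space M. a < U 1 \<omega> \<and> U L \<omega> \<le> b}"
    by (auto simp: X_def)
  also have "emeasure M \<dots> = ennreal (prob {\<omega>\<in>space M. a < U 1 \<omega> \<and> U L \<omega> \<le> b})"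
    by (simp add: emeasure_eq_measure)
  also have "\<dots> = ennreal (Fcdf L a b)" by (simp only: cdf_prob)
  finally show ?thesis .
qed

lemma distr_T: "emeasure (distr M borel X) {p. snd p \<le> b} = ennreal (Fcdf L (-1) b)"
proof -
  have "emeasure (distr M borel X) {p. snd p \<le> b} = emeasure M (X -` {p. snd p \<le> b} \<inter> space M)"
    using sets_T X_meas by (intro emeasure_distr) auto
  also have "X -` {p. snd p \<le> b} \<inter> space M = {\<omega>\<in>space M. -1 < U 1 \<omega> \<and> U L \<omega> \<le> b}"
  proof -
    have "\<And>\<omega>. -1 < U 1 \<omega>" using U_nonneg[of 1] by (metis neg_less_0_iff_less zero_less_one order_less_le_trans)
    then show ?thesis by (auto simp: X_def)
  qed
  also have "emeasure M \<dots> = ennreal (prob {\<omega>\<in>space M. -1 < U 1 \<omega> \<and> U L \<omega> \<le> b})"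
    by (simp add: emeasure_eq_measure)
  also have "\<dots> = ennreal (Fcdf L (-1) b)" by (simp only: cdf_prob)
  finally show ?thesis .
qed

lemma distrX: "distr M borel X = density lborel (\<lambda>p. ennreal (Dn L p))"
proof (rule measure_eqI_generator_eq[where E="range atMost" and \<Omega>=UNIV and A="\<lambda>i. {..(real i, real i)}"])
  show "Int_stable (range atMost :: (real\<times>real) set set)"
  proof (rule Int_stableI)
    fix A B :: "(real\<times>real) set" assume "A \<in> range atMost" "B \<in> range atMost"
    then obtain x y where xy: "A = {..x}" "B = {..y}" by auto
    have "{..x} \<inter> {..y} = {..(min (fst x) (fst y), min (snd x) (snd y))}"
      by (auto simp: less_eq_prod_def)
    then show "A \<inter> B \<in> range atMost" using xy by auto
  qed
  show "range atMost \<subseteq> Pow (UNIV :: (real\<times>real) set)" by auto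
  show "sets (distr M borel X) = sigma_sets UNIV (range atMost)"
    by (simp add: borel_eq_atMost)
  show "sets (density lborel (\<lambda>p. ennreal (Dn L p))) = sigma_sets UNIV (range atMost)"
    by (simp add: borel_eq_atMost)
  show "range (\<lambda>i::nat. {..(real i, real i)}) \<subseteq> range atMost" by auto
  show "(\<Union>i::nat. {..(real i, real i)}) = UNIV"
  proof (rule set_eqI, rule iffI)
    fix p :: "real\<times>real"
    obtain n :: nat where "max (fst p) (snd p) \<le> real n" using real_arch_simple by blast
    then show "p \<in> (\<Union>i::nat. {..(real i, real i)})" by (auto simp: less_eq_prod_def)
  qed auto
  show "emeasure (distr M borel X) {..(real i, real i)} \<noteq> \<infinity>" for i
    using X_meas by (simp add: emeasure_distr emeasure_eq_measure)
  fix Y :: "(real\<times>real) set" assume "Y \<in> range atMost"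
  then obtain a b where Y: "Y = {p. fst p \<le> a \<and> snd p \<le> b}" by (auto simp: atMost_pair)
  have 1: "emeasure (distr M borel X) Y + ennreal (Fcdf L a b) = ennreal (Fcdf L (-1) b)"
    using split_emeasure[of "distr M borel X" a b] distr_S distr_T Y by simp
  have 2: "emeasure (density lborel (\<lambda>p. ennreal (Dn L p))) Y + ennreal (Fcdf L a b) = ennreal (Fcdf L (-1) b)"
    using split_emeasure[of "density lborel (\<lambda>p. ennreal (Dn L p))" a b] dens_S[OF L2] dens_T[OF L2] Y by simp
  from 1 2 have "ennreal (Fcdf L a b) + emeasure (distr M borel X) Y = ennreal (Fcdf L a b) + emeasure (density lborel (\<lambda>p. ennreal (Dn L p))) Y"
    by (simp only: add.commute)
  then show "emeasure (distr M borel X) Y = emeasure (density lborel (\<lambda>p. ennreal (Dn L p))) Y"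
    unfolding ennreal_add_left_cancel by simp
qed

end


lemma quad_iff:
  fixes t c e :: real
  assumes t: "0 < t" and c: "0 \<le> c"
  shows "t^2 + 2*c*t \<le> e \<longleftrightarrow> t \<le> sqrt (e + c^2) - c"
proof
  assume h: "t^2 + 2*c*t \<le> e"
  have "(t + c)^2 \<le> e + c^2" using h by (simp add: power2_eq_square algebra_simps)
  then have "sqrt ((t+c)^2) \<le> sqrt (e + c^2)" by (rule real_sqrt_le_mono)
  then show "t \<le> sqrt (e + c^2) - c" using t c by simp
next
  assume h: "t \<le> sqrt (e + c^2) - c"
  then have h1: "t + c \<le> sqrt (e + c^2)" by simp
  have "0 < t + c" using t c by simp
  then have "0 < sqrt (e + c^2)" using h1 by linarith
  then have "0 < e + c^2" by simp
  then have e0: "0 \<le> e + c^2" by simp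
  have "(t + c)^2 \<le> (sqrt (e + c^2))^2" using h1 \<open>0 < t + c\<close> by (intro power_mono) auto
  then have "(t + c)^2 \<le> e + c^2" using e0 by simp
  then show "t^2 + 2*c*t \<le> e" by (simp add: power2_eq_square algebra_simps)
qed

lemma T_gt1_iff:
  fixes c e :: real
  assumes c: "0 \<le> c"
  shows "1 < sqrt (e + c^2) - c \<longleftrightarrow> 1 + 2*c < e"
proof -
  have s: "sqrt ((1+c)^2) = 1 + c" using c by simp
  have "1 < sqrt (e + c^2) - c \<longleftrightarrow> sqrt ((1+c)^2) < sqrt (e + c^2)" unfolding s by auto
  also have "\<dots> \<longleftrightarrow> (1+c)^2 < e + c^2" by (rule real_sqrt_less_iff)
  also have "\<dots> \<longleftrightarrow> 1 + 2*c < e" by (simp add: power2_eq_square algebra_simps)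
  finally show ?thesis .
qed

lemma T_ge1_iff:
  fixes c e :: real
  assumes c: "0 \<le> c"
  shows "1 \<le> sqrt (e + c^2) - c \<longleftrightarrow> 1 + 2*c \<le> e"
proof -
  have s: "sqrt ((1+c)^2) = 1 + c" using c by simp
  have "1 \<le> sqrt (e + c^2) - c \<longleftrightarrow> sqrt ((1+c)^2) \<le> sqrt (e + c^2)" unfolding s by auto
  also have "\<dots> \<longleftrightarrow> (1+c)^2 \<le> e + c^2" by (rule real_sqrt_le_iff)
  also have "\<dots> \<longleftrightarrow> 1 + 2*c \<le> e" by (simp add: power2_eq_square algebra_simps)
  finally show ?thesis .
qed

lemma aux_div: "(B::real) \<noteq> 0 \<Longrightarrow> (- B / A) / B = - 1 / A"
  by (cases "A = 0") (simp_all add: field_simps)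

lemma sir_simp:
  fixes x y lam :: real
  assumes "0 < x" "x < y" "2 \<le> L"
  shows "sir_approx 4 1 lam (L-1) x y = 1 / ((y^2/x^2)^2 + (real L - 2) * (y^2/x^2) + lam*pi*y^2)"
proof -
  have y: "0 < y" using assms by simp
  have L1: "1 \<le> L - 1" using assms by simp
  have p4: "z powr (-4) = 1 / z^4" if "0 < z" for z :: real
    using that by (simp add: powr_minus_divide powr_numeral)
  have p2: "z powr (2 - 4) = 1 / z^2" if "0 < z" for z :: real
  proof -
    have "z powr (2 - 4) = z powr (-2)" by simp
    also have "\<dots> = 1 / z^2" using that by (simp add: powr_minus_divide powr_numeral)
    finally show ?thesis .
  qed
  have "x^2 < y^2" using assms by (intro power_strict_mono) auto
  then have nz: "y^2 - x^2 \<noteq> 0" by simp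
  have r: "real (L - 1) - 1 = real L - 2" using assms by (simp add: of_nat_diff)
  have mid: "(1/y^2 - 1/x^2) / (y^2 - x^2) = - 1 / (x^2 * y^2)"
  proof -
    have "1/y^2 - 1/x^2 = (x^2 - y^2) / (x^2 * y^2)" using assms y by (simp add: diff_frac_eq)
    also have "\<dots> = - (y^2 - x^2) / (x^2 * y^2)" by simp
    finally have "(1/y^2 - 1/x^2) / (y^2 - x^2) = (- (y^2 - x^2) / (x^2 * y^2)) / (y^2 - x^2)" by simp
    also have "\<dots> = - 1 / (x^2 * y^2)"
      by (rule aux_div[OF nz])
    finally show ?thesis .
  qed
  have "sir_approx 4 1 lam (L-1) x y = (1/y^4) / (1/x^4 + 2 * (real L - 2) / (2 - 4) * (- 1 / (x^2 * y^2)) + 2 * pi * 1 * lam / (4 - 2) * (1/y^2))"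
    unfolding sir_approx_def using L1 by (simp only: p4[OF assms(1)] p4[OF y] p2[OF assms(1)] p2[OF y] mid r if_True)
  also have "\<dots> = 1 / ((y^2/x^2)^2 + (real L - 2) * (y^2/x^2) + lam*pi*y^2)"
  proof -
    have "2 * (real L - 2) / (2 - 4) * (- 1 / (x^2 * y^2)) = (real L - 2) / (x^2 * y^2)"
      using assms y by (simp add: field_simps)
    moreover have "2 * pi * 1 * lam / (4 - 2) * (1/y^2) = lam * pi / y^2" by simp
    ultimately have "(1/y^4) / (1/x^4 + 2 * (real L - 2) / (2 - 4) * (- 1 / (x^2 * y^2)) + 2 * pi * 1 * lam / (4 - 2) * (1/y^2))
       = (1/y^4) / (1/x^4 + (real L - 2) / (x^2 * y^2) + lam * pi / y^2)" by simp
    also have "\<dots> = 1 / (y^4 * (1/x^4 + (real L - 2) / (x^2 * y^2) + lam * pi / y^2))"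
      by simp
    also have "y^4 * (1/x^4 + (real L - 2) / (x^2 * y^2) + lam * pi / y^2) = (y^2/x^2)^2 + (real L - 2) * (y^2/x^2) + lam*pi*y^2"
      using assms y by (simp add: field_simps power2_eq_square power4_eq_xxxx)
    finally show ?thesis .
  qed
  finally show ?thesis .
qed

definition Tf :: "nat \<Rightarrow> real \<Rightarrow> real \<Rightarrow> real" where
  "Tf L K v = sqrt (K - v + (real L - 2)^2/4) - (real L - 2)/2"

definition Bset :: "nat \<Rightarrow> real \<Rightarrow> (real \<times> real) set" where
  "Bset L K = {p. 0 < fst p \<and> fst p < snd p \<and> (snd p/fst p)^2 + (real L - 2)*(snd p/fst p) + snd p \<le> K}"

definition g0 :: "nat \<Rightarrow> real \<Rightarrow> real \<Rightarrow> real" where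
  "g0 L K v = exp (- v) * v^(L-1) * (1 - 1 / Tf L K v)^(L-1) / fact (L-1)"

definition gv :: "nat \<Rightarrow> real \<Rightarrow> real \<Rightarrow> real" where
  "gv L K v = (if 0 < v \<and> v < K - real (L-1) then g0 L K v else 0)"

lemma Tf_alt: "2 \<le> L \<Longrightarrow> Tf L K v = sqrt ((K - v) + ((real L - 2)/2)^2) - (real L - 2)/2"
  by (simp add: Tf_def power_divide)

lemma Tf_gt1: assumes "2 \<le> L" shows "1 < Tf L K v \<longleftrightarrow> v < K - real (L-1)"
proof -
  have c: "0 \<le> (real L - 2)/2" using assms by simp
  have "1 < Tf L K v \<longleftrightarrow> 1 + 2*((real L - 2)/2) < K - v"
    unfolding Tf_alt[OF assms] by (rule T_gt1_iff[OF c])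
  also have "\<dots> \<longleftrightarrow> v < K - real (L-1)"
  proof -
    have h: "1 + 2*((real L - 2)/2) = real (L-1)" using assms by (simp add: of_nat_diff field_simps)
    show ?thesis unfolding h by auto
  qed
  finally show ?thesis .
qed

lemma Tf_ge1: assumes "2 \<le> L" shows "1 \<le> Tf L K v \<longleftrightarrow> v \<le> K - real (L-1)"
proof -
  have c: "0 \<le> (real L - 2)/2" using assms by simp
  have "1 \<le> Tf L K v \<longleftrightarrow> 1 + 2*((real L - 2)/2) \<le> K - v"
    unfolding Tf_alt[OF assms] by (rule T_ge1_iff[OF c])
  also have "\<dots> \<longleftrightarrow> v \<le> K - real (L-1)"
  proof -
    have h: "1 + 2*((real L - 2)/2) = real (L-1)" using assms by (simp add: of_nat_diff field_simps)
    show ?thesis unfolding h by auto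
  qed
  finally show ?thesis .
qed

lemma Bset_iff:
  assumes u: "0 < u" and v: "0 < v" and L: "2 \<le> L"
  shows "(u,v) \<in> Bset L K \<longleftrightarrow> (v < K - real (L-1) \<and> v / Tf L K v \<le> u \<and> u < v)"
proof -
  define c where "c = (real L - 2)/2"
  have c0: "0 \<le> c" using L by (simp add: c_def)
  have t0: "0 < v/u" using u v by simp
  have q: "(v/u)^2 + (real L - 2)*(v/u) + v \<le> K \<longleftrightarrow> v/u \<le> Tf L K v"
  proof -
    have "2*c = real L - 2" by (simp add: c_def)
    then have "(v/u)^2 + (real L - 2)*(v/u) + v \<le> K \<longleftrightarrow> (v/u)^2 + 2*c*(v/u) \<le> K - v"
      by (simp only:) linarith
    also have "\<dots> \<longleftrightarrow> v/u \<le> sqrt ((K - v) + c^2) - c" by (rule quad_iff[OF t0 c0])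
    also have "\<dots> \<longleftrightarrow> v/u \<le> Tf L K v" by (simp add: Tf_alt[OF L] c_def)
    finally show ?thesis .
  qed
  show ?thesis
  proof
    assume B: "(u,v) \<in> Bset L K"
    then have uv: "u < v" and tT: "v/u \<le> Tf L K v" using q by (auto simp: Bset_def)
    have "1 < v/u" using uv u by simp
    then have T1: "1 < Tf L K v" using tT by linarith
    then have "v < K - real (L-1)" using Tf_gt1[OF L] by simp
    moreover have "v / Tf L K v \<le> u" using tT T1 u by (simp add: divide_le_eq pos_divide_le_eq mult.commute)
    ultimately show "v < K - real (L-1) \<and> v / Tf L K v \<le> u \<and> u < v" using uv by simp
  next
    assume h: "v < K - real (L-1) \<and> v / Tf L K v \<le> u \<and> u < v"
    then have T1: "1 < Tf L K v" using Tf_gt1[OF L] by simp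
    have "v/u \<le> Tf L K v" using h T1 u by (simp add: divide_le_eq pos_divide_le_eq mult.commute)
    then show "(u,v) \<in> Bset L K" using q h u by (simp add: Bset_def)
  qed
qed

lemma inner_int_co:
  fixes c v e :: real
  assumes "c \<le> v" "0 \<le> e"
  shows "(\<integral>\<^sup>+u. ennreal ((v-u)^m / fact m * e) * indicator {c..<v} u \<partial>lborel) = ennreal ((v-c)^(Suc m) / fact (Suc m) * e)"
proof -
  have "AE u in lborel. u \<noteq> c" by (rule AE_lborel_singleton)
  then have "AE u in lborel. ennreal ((v-u)^m / fact m * e) * indicator {c..<v} u = ennreal ((v-u)^m / fact m * e) * indicator {c<..<v} u"
    by eventually_elim (auto split: split_indicator)
  then have "(\<integral>\<^sup>+u. ennreal ((v-u)^m / fact m * e) * indicator {c..<v} u \<partial>lborel) = (\<integral>\<^sup>+u. ennreal ((v-u)^m / fact m * e) * indicator {c<..<v} u \<partial>lborel)"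
    by (rule nn_integral_cong_AE)
  also have "\<dots> = ennreal ((v-c)^(Suc m) / fact (Suc m) * e)" by (rule inner_int[OF assms])
  finally show ?thesis .
qed

lemma inner_B:
  assumes L: "2 \<le> L"
  shows "(\<integral>\<^sup>+u. ennreal (Dn L (u,v)) * indicator (Bset L K) (u,v) \<partial>lborel) = ennreal (gv L K v)"
proof (cases "0 < v \<and> v < K - real (L-1)")
  case vT: True
  then have v: "0 < v" and T1: "1 < Tf L K v" using Tf_gt1[OF L] by auto
  define c where "c = v / Tf L K v"
  have c: "0 < c" "c < v" using v T1 by (auto simp: c_def divide_less_eq)
  have pw: "ennreal (Dn L (u,v)) * indicator (Bset L K) (u,v) = ennreal ((v-u)^(L-2) / fact (L-2) * exp (-v)) * indicator {c..<v} u" for u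
  proof (cases "0 < u")
    case True
    show ?thesis using Bset_iff[OF True v L, of K] True c vT by (auto simp: Dn_def c_def split: split_indicator)
  next
    case False
    then have "u \<notin> {c..<v}" using c by auto
    moreover have "(u,v) \<notin> Bset L K" using False by (auto simp: Bset_def)
    ultimately show ?thesis by simp
  qed
  have "(\<integral>\<^sup>+u. ennreal (Dn L (u,v)) * indicator (Bset L K) (u,v) \<partial>lborel) = (\<integral>\<^sup>+u. ennreal ((v-u)^(L-2) / fact (L-2) * exp (-v)) * indicator {c..<v} u \<partial>lborel)"
    by (simp only: pw)
  also have "\<dots> = ennreal ((v-c)^(Suc (L-2)) / fact (Suc (L-2)) * exp (-v))"
    using c by (intro inner_int_co) auto
  also have "(v-c)^(Suc (L-2)) / fact (Suc (L-2)) * exp (-v) = gv L K v"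
  proof -
    have s: "Suc (L-2) = L - 1" using L by simp
    have "v - c = v * (1 - 1 / Tf L K v)" by (simp add: c_def algebra_simps)
    then show ?thesis using vT unfolding s by (simp add: gv_def g0_def power_mult_distrib)
  qed
  finally show ?thesis .
next
  case False
  have z: "ennreal (Dn L (u,v)) * indicator (Bset L K) (u,v) = 0" for u
  proof (cases "0 < u \<and> 0 < v")
    case True
    then have "(u,v) \<notin> Bset L K" using Bset_iff[of u v L K] L False by auto
    then show ?thesis by simp
  next
    case False
    then have "(u,v) \<notin> Bset L K" by (auto simp: Bset_def)
    then show ?thesis by simp
  qed
  have "(\<integral>\<^sup>+u. ennreal (Dn L (u,v)) * indicator (Bset L K) (u,v) \<partial>lborel) = 0" by (simp add: z)
  moreover have "gv L K v = 0" using False unfolding gv_def by presburger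
  ultimately show ?thesis by simp
qed

lemma Bset_pair: "Bset L K \<in> sets (lborel \<Otimes>\<^sub>M lborel)"
proof -
  have "{p \<in> space (lborel \<Otimes>\<^sub>M lborel). 0 < fst p \<and> fst p < snd p \<and> (snd p/fst p)^2 + (real L - 2)*(snd p/fst p) + snd p \<le> K} \<in> sets (lborel \<Otimes>\<^sub>M lborel)"
    by measurable
  then show ?thesis by (simp add: Bset_def space_pair_measure)
qed

lemma dens_B:
  assumes L: "2 \<le> L"
  shows "emeasure (density lborel (\<lambda>p. ennreal (Dn L p))) (Bset L K) = (\<integral>\<^sup>+v. ennreal (gv L K v) \<partial>lborel)"
proof -
  note Bp = Bset_pair[of L K]
  have B: "Bset L K \<in> sets borel" using Bp by (rule sets_pair_borel)
  note Bp[measurable]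
  have "emeasure (density lborel (\<lambda>p. ennreal (Dn L p))) (Bset L K) = (\<integral>\<^sup>+p. ennreal (Dn L p) * indicator (Bset L K) p \<partial>lborel)"
    using B by (intro emeasure_density) auto
  also have "\<dots> = (\<integral>\<^sup>+p. ennreal (Dn L p) * indicator (Bset L K) p \<partial>(lborel \<Otimes>\<^sub>M lborel))"
    by (simp add: lborel_prod)
  also have "\<dots> = (\<integral>\<^sup>+v. \<integral>\<^sup>+u. ennreal (Dn L (u,v)) * indicator (Bset L K) (u,v) \<partial>lborel \<partial>lborel)"
    by (intro lborel_pair.nn_integral_snd[symmetric]) measurable
  also have "\<dots> = (\<integral>\<^sup>+v. ennreal (gv L K v) \<partial>lborel)"
    by (simp only: inner_B[OF L])
  finally show ?thesis .
qed

lemma Tf_cont: "continuous_on S (Tf L K)"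
  unfolding Tf_def[abs_def] by (intro continuous_intros)

lemma g0_cont:
  assumes L: "2 \<le> L"
  shows "continuous_on {0..K - real (L-1)} (g0 L K)"
proof -
  have nz: "\<forall>v\<in>{0..K - real (L-1)}. Tf L K v \<noteq> 0"
    using Tf_ge1[OF L] by (auto) (metis zero_neq_one order.order_iff_strict not_one_le_zero)
  show ?thesis
    unfolding g0_def[abs_def] using nz
    by (intro continuous_intros Tf_cont) auto
qed

lemma gv_eq:
  assumes L: "2 \<le> L" and vm: "0 < K - real (L-1)"
  shows "gv L K v = (if v \<in> {0..K - real (L-1)} then g0 L K v else 0)"
proof -
  have L1: "L - 1 \<noteq> 0" using L by simp
  consider "v < 0 \<or> K - real (L-1) < v" | "0 < v \<and> v < K - real (L-1)" | "v = 0" | "v = K - real (L-1)"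
    by linarith
  then show ?thesis
  proof cases
    case 1 then show ?thesis by (auto simp: gv_def)
  next
    case 2 then show ?thesis by (simp add: gv_def)
  next
    case 3 then show ?thesis using L1 vm by (simp add: gv_def g0_def)
  next
    case 4
    then have "Tf L K v = 1" using Tf_ge1[OF L, of K v] Tf_gt1[OF L, of K v] by simp
    then show ?thesis using 4 L1 vm by (simp add: gv_def g0_def)
  qed
qed

lemma gv_nonneg: assumes L: "2 \<le> L" shows "0 \<le> gv L K v"
proof (cases "0 < v \<and> v < K - real (L-1)")
  case True
  then have "1 < Tf L K v" using Tf_gt1[OF L] by simp
  then have "0 \<le> 1 - 1 / Tf L K v" by simp
  then show ?thesis using True by (simp add: gv_def g0_def)
next
  case False
  then have "gv L K v = 0" unfolding gv_def by presburger
  then show ?thesis by simp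
qed

lemma gv_meas: "gv L K \<in> borel_measurable borel"
  unfolding gv_def[abs_def] g0_def Tf_def by measurable

lemma gv_integral:
  assumes L: "2 \<le> L" and vm: "0 < K - real (L-1)"
  shows "(\<integral>\<^sup>+v. ennreal (gv L K v) \<partial>lborel) = ennreal (integral {0..K - real (L-1)} (g0 L K))"
proof -
  have "(g0 L K has_integral integral {0..K - real (L-1)} (g0 L K)) {0..K - real (L-1)}"
    by (intro integrable_integral integrable_continuous_interval g0_cont[OF L])
  then have "((\<lambda>v. if v \<in> {0..K - real (L-1)} then g0 L K v else 0) has_integral integral {0..K - real (L-1)} (g0 L K)) UNIV"
    by (simp only: has_integral_restrict_UNIV)
  then have "(gv L K has_integral integral {0..K - real (L-1)} (g0 L K)) UNIV"
    by (simp only: gv_eq[OF L vm, symmetric])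
  then show ?thesis
    by (intro nn_integral_has_integral_lborel gv_meas gv_nonneg[OF L])
qed

lemma gv_zero:
  assumes "K - real (L-1) \<le> 0"
  shows "(\<integral>\<^sup>+v. ennreal (gv L K v) \<partial>lborel) = 0"
proof -
  have "gv L K v = 0" for v using assms by (simp add: gv_def)
  then show ?thesis by simp
qed

lemma aux_id: "(r::real) \<noteq> 0 \<Longrightarrow> F \<noteq> 0 \<Longrightarrow> (2*lam*pi*r) * (E * P * A / F) = A * (E * (2 * (P * (lam*pi*r^2))) / (r * F))"
  by (simp add: field_simps power2_eq_square)

lemma subst_int:
  fixes lam K :: real
  assumes L: "2 \<le> L" and vm: "0 < K - real (L-1)" and lam: "0 < lam"
  defines "f \<equiv> (\<lambda>r::real. exp (- lam * pi * r^2) * (2 * (lam * pi * r^2) ^ L) / (r * fact (L - 1)))"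
  shows "integral {0 .. sqrt ((K - real (L - 1)) / (pi * lam))}
            (\<lambda>r. (1 - 1 / (sqrt (K - pi * lam * r^2 + (real L - 2)^2 / 4) - (real L - 2) / 2)) ^ (L - 1) * f r)
         = integral {0..K - real (L-1)} (g0 L K)"
proof -
  define rm where "rm = sqrt ((K - real (L - 1)) / (pi * lam))"
  define vm' where "vm' = K - real (L-1)"
  have rm0: "0 \<le> rm" using vm lam by (simp add: rm_def)
  have grm: "lam * pi * rm^2 = vm'" using vm lam by (simp add: rm_def vm'_def)
  have sub: "((\<lambda>r. (2 * lam * pi * r) *\<^sub>R g0 L K (lam * pi * r^2)) has_integral
      integral {lam * pi * 0^2 .. lam * pi * rm^2} (g0 L K)) {0..rm}"
  proof (rule has_integral_substitution[where c=0 and d=vm'])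
    show "0 \<le> rm" by (rule rm0)
    show "lam * pi * 0^2 \<le> lam * pi * rm^2" using lam by simp
    show "(\<lambda>r. lam * pi * r^2) ` {0..rm} \<subseteq> {0..vm'}"
    proof
      fix y assume "y \<in> (\<lambda>r. lam * pi * r^2) ` {0..rm}"
      then obtain r where r: "0 \<le> r" "r \<le> rm" "y = lam * pi * r^2" by auto
      have "r^2 \<le> rm^2" using r by (intro power_mono) auto
      then have "lam * pi * r^2 \<le> lam * pi * rm^2" using lam by (intro mult_left_mono) auto
      then show "y \<in> {0..vm'}" using r grm lam by auto
    qed
    show "continuous_on {0..vm'} (g0 L K)" unfolding vm'_def by (rule g0_cont[OF L])
    fix x assume "x \<in> {0..rm}"
    show "((\<lambda>r. lam * pi * r^2) has_field_derivative 2 * lam * pi * x) (at x within {0..rm})"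
      by (auto intro!: derivative_eq_intros)
  qed
  have sub': "((\<lambda>r. (2 * lam * pi * r) *\<^sub>R g0 L K (lam * pi * r^2)) has_integral
      integral {0 .. vm'} (g0 L K)) {0..rm}" using sub grm by simp
  have sub2: "((\<lambda>r. (1 - 1 / (sqrt (K - pi * lam * r^2 + (real L - 2)^2 / 4) - (real L - 2) / 2)) ^ (L - 1) * f r)
     has_integral integral {0..vm'} (g0 L K)) {0..rm}"
  proof (rule has_integral_eq[OF _ sub'])
    fix r :: real assume r: "r \<in> {0..rm}"
    have T: "Tf L K (lam * pi * r^2) = sqrt (K - pi * lam * r^2 + (real L - 2)^2 / 4) - (real L - 2) / 2"
      by (simp add: Tf_def mult.commute mult.left_commute)
    show "(2 * lam * pi * r) *\<^sub>R g0 L K (lam * pi * r^2) = (1 - 1 / (sqrt (K - pi * lam * r^2 + (real L - 2)^2 / 4) - (real L - 2) / 2)) ^ (L - 1) * f r"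
    proof (cases "r = 0")
      case True then show ?thesis by (simp add: f_def)
    next
      case False
      have LL: "L = Suc (L-1)" using L by simp
      have p: "(lam * pi * r^2) ^ L = (lam * pi * r^2) ^ (L-1) * (lam * pi * r^2)"
        by (subst LL) (simp only: power_Suc mult.commute)
      have e: "exp (- lam * pi * r^2) = exp (-(lam*pi*r^2))" by simp
      show ?thesis unfolding T[symmetric] f_def g0_def p e real_scaleR_def
        by (rule aux_id[OF False]) simp
    qed
  qed
  then show ?thesis by (simp add: rm_def vm'_def integral_unique)
qed


lemma Bad_sets: "{p::real\<times>real. fst p \<le> 0 \<or> snd p \<le> fst p} \<in> sets borel"
proof -
  have "closed {p::real\<times>real. fst p \<le> 0 \<or> snd p \<le> fst p}"
    by (intro closed_Collect_disj closed_Collect_le continuous_intros)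
  then show ?thesis by (rule borel_closed)
qed

context ppsetup
begin

lemma null_bad: "X -` {p. fst p \<le> 0 \<or> snd p \<le> fst p} \<inter> space M \<in> null_sets M"
proof -
  define Bad where "Bad = {p::real\<times>real. fst p \<le> 0 \<or> snd p \<le> fst p}"
  have Bs: "Bad \<in> sets borel" unfolding Bad_def by (rule Bad_sets)
  have m: "X -` Bad \<inter> space M \<in> sets M" using X_meas Bs by (intro measurable_sets) auto
  have "emeasure M (X -` Bad \<inter> space M) = emeasure (distr M borel X) Bad"
    using X_meas Bs by (intro emeasure_distr[symmetric]) auto
  also have "\<dots> = emeasure (density lborel (\<lambda>p. ennreal (Dn L p))) Bad" by (simp only: distrX)
  also have "\<dots> = (\<integral>\<^sup>+p. ennreal (Dn L p) * indicator Bad p \<partial>lborel)"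
    using Bs by (intro emeasure_density) auto
  also have "\<dots> = (\<integral>\<^sup>+p. 0 \<partial>(lborel :: (real\<times>real) measure))"
    by (intro nn_integral_cong) (auto simp: Dn_def Bad_def split: split_indicator)
  also have "\<dots> = 0" by simp
  finally show ?thesis using m unfolding Bad_def by (intro null_setsI) auto
qed

lemma prob_eqN:
  assumes "A \<in> sets M" "B \<in> sets M" "N \<in> null_sets M" "\<And>\<omega>. \<omega> \<in> space M - N \<Longrightarrow> \<omega> \<in> A \<longleftrightarrow> \<omega> \<in> B"
  shows "prob A = prob B"
proof -
  have "A - N = B - N" using assms sets.sets_into_space[OF assms(1)] sets.sets_into_space[OF assms(2)] by blast
  then show ?thesis using measure_Diff_null_set[OF assms(1) assms(3)] measure_Diff_null_set[OF assms(2) assms(3)] by simp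
qed

lemma R_meas'[measurable]: "R k \<in> borel_measurable M" by (rule R_meas)

lemma main_P:
  assumes b: "0 < \<beta>" and g: "0 < \<gamma>"
  shows "ennreal (prob {\<omega>\<in>space M. \<beta>/\<gamma> \<le> sir_approx 4 1 lam (L-1) (kth_dist (Phi \<omega>) 1) (kth_dist (Phi \<omega>) L)})
         = (\<integral>\<^sup>+v. ennreal (gv L (\<gamma>/\<beta>) v) \<partial>lborel)"
proof -
  define E where "E = {\<omega>\<in>space M. \<beta>/\<gamma> \<le> sir_approx 4 1 lam (L-1) (kth_dist (Phi \<omega>) 1) (kth_dist (Phi \<omega>) L)}"
  have E_alt: "E = {\<omega>\<in>space M. \<beta>/\<gamma> \<le> sir_approx 4 1 lam (L-1) (R 1 \<omega>) (R L \<omega>)}"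
    by (simp add: E_def R_def)
  have Es: "E \<in> sets M" unfolding E_alt sir_approx_def by measurable
  define N where "N = Z \<union> (X -` {p. fst p \<le> 0 \<or> snd p \<le> fst p} \<inter> space M)"
  have N: "N \<in> null_sets M" unfolding N_def using Z_null null_bad by (rule null_sets.Un)
  have Bb: "Bset L (\<gamma>/\<beta>) \<in> sets borel" by (rule sets_pair_borel[OF Bset_pair])
  have B's: "X -` Bset L (\<gamma>/\<beta>) \<inter> space M \<in> sets M" using X_meas Bb by (intro measurable_sets) auto
  have "prob E = prob (X -` Bset L (\<gamma>/\<beta>) \<inter> space M)"
  proof (rule prob_eqN[OF Es B's N])
    fix \<omega> assume \<omega>: "\<omega> \<in> space M - N"
    then have \<omega>Z: "\<omega> \<in> space M - Z" by (auto simp: N_def)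
    have gd: "0 < U 1 \<omega> \<and> U 1 \<omega> < U L \<omega>" using \<omega> by (auto simp: N_def X_def)
    have L1: "(1::nat) \<le> L" using L2 by simp
    have r1: "0 \<le> R 1 \<omega>" and rL: "0 \<le> R L \<omega>" using R_char(1)[OF \<omega>Z L1] R_char(1)[OF \<omega>Z order_refl] by auto
    have lp: "0 < lam * pi" using lam_pos by simp
    have r1p: "0 < R 1 \<omega>" using gd r1 by (cases "R 1 \<omega> = 0") (auto simp: U_def)
    have "lam*pi*(R 1 \<omega>)^2 < lam*pi*(R L \<omega>)^2" using gd by (simp add: U_def)
    then have "(R 1 \<omega>)^2 < (R L \<omega>)^2" using mult_less_cancel_left_pos[OF lp] by blast
    then have r12: "R 1 \<omega> < R L \<omega>" using rL by (rule power_less_imp_less_base)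
    define q where "q = (R L \<omega>)^2 / (R 1 \<omega>)^2"
    define D where "D = q^2 + (real L - 2) * q + lam*pi*(R L \<omega>)^2"
    have q0: "0 < q" using r1p r12 by (simp add: q_def)
    have D0: "0 < D" unfolding D_def using q0 L2 lam_pos by (intro add_pos_nonneg add_nonneg_nonneg) auto
    have sir: "sir_approx 4 1 lam (L-1) (R 1 \<omega>) (R L \<omega>) = 1 / D"
      unfolding D_def q_def by (rule sir_simp[OF r1p r12 L2])
    have "\<omega> \<in> E \<longleftrightarrow> \<beta>/\<gamma> \<le> 1 / D" using \<omega> sir by (simp add: E_alt)
    also have "\<dots> \<longleftrightarrow> D \<le> \<gamma>/\<beta>" using D0 b g by (simp add: field_simps)
    also have "\<dots> \<longleftrightarrow> X \<omega> \<in> Bset L (\<gamma>/\<beta>)"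
    proof -
      have eq1: "U L \<omega> / U 1 \<omega> = q" using lp lam_pos by (simp add: U_def q_def)
      have eq2: "lam*pi*(R L \<omega>)^2 = U L \<omega>" by (simp add: U_def)
      have xb: "X \<omega> \<in> Bset L (\<gamma>/\<beta>) \<longleftrightarrow> (0 < U 1 \<omega> \<and> U 1 \<omega> < U L \<omega> \<and> (U L \<omega> / U 1 \<omega>)^2 + (real L - 2) * (U L \<omega> / U 1 \<omega>) + U L \<omega> \<le> \<gamma>/\<beta>)"
        by (simp only: X_def Bset_def mem_Collect_eq fst_conv snd_conv)
      show ?thesis unfolding xb eq1 D_def eq2 using gd by blast
    qed
    finally show "\<omega> \<in> E \<longleftrightarrow> \<omega> \<in> X -` Bset L (\<gamma>/\<beta>) \<inter> space M" using \<omega> by simp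
  qed
  then have "ennreal (prob E) = emeasure M (X -` Bset L (\<gamma>/\<beta>) \<inter> space M)"
    by (simp add: emeasure_eq_measure)
  also have "\<dots> = emeasure (distr M borel X) (Bset L (\<gamma>/\<beta>))"
    using X_meas Bb by (intro emeasure_distr[symmetric]) auto
  also have "\<dots> = emeasure (density lborel (\<lambda>p. ennreal (Dn L p))) (Bset L (\<gamma>/\<beta>))" by (simp only: distrX)
  also have "\<dots> = (\<integral>\<^sup>+v. ennreal (gv L (\<gamma>/\<beta>) v) \<partial>lborel)" by (rule dens_B[OF L2])
  finally show ?thesis by (simp add: E_def)
qed

end

lemma g0_nonneg: assumes L: "2 \<le> L" "v \<in> {0..K - real (L-1)}" shows "0 \<le> g0 L K v"
proof -
  have "1 \<le> Tf L K v" using Tf_ge1[OF L(1)] L(2) by simp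
  then have "0 \<le> 1 - 1 / Tf L K v" by simp
  then show ?thesis using L(2) by (simp add: g0_def)
qed

theorem corollary5:
  fixes M :: "'w measure" and Phi :: "'w \<Rightarrow> (real \<times> real) set"
    and lam \<gamma> \<beta> :: real and L :: nat
  assumes ppp: "poisson_pp M lam Phi"
    and lam_pos: "lam > 0" and gam_pos: "\<gamma> > 0" and beta_pos: "\<beta> > 0"
    and L_ge: "L \<ge> 2"
  defines "P \<equiv> measure M {\<omega> \<in> space M.
               sir_approx 4 1 lam (L - 1) (kth_dist (Phi \<omega>) 1) (kth_dist (Phi \<omega>) L) \<ge> \<beta> / \<gamma>}"
    and "f \<equiv> (\<lambda>r::real. exp (- lam * pi * r^2) * (2 * (lam * pi * r^2) ^ L) / (r * fact (L - 1)))"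
  shows "(\<beta> < \<gamma> / real (L - 1) \<longrightarrow>
            P = integral {0 .. sqrt ((\<gamma> / \<beta> - real (L - 1)) / (pi * lam))}
                  (\<lambda>r. (1 - 1 / (sqrt (\<gamma> / \<beta> - pi * lam * r^2 + (real L - 2)^2 / 4)
                                   - (real L - 2) / 2)) ^ (L - 1) * f r))
       \<and> (\<beta> \<ge> \<gamma> / real (L - 1) \<longrightarrow> P = 0)"
proof -
  interpret ppsetup M lam Phi L using ppp lam_pos L_ge by unfold_locales auto
  have key: "ennreal P = (\<integral>\<^sup>+v. ennreal (gv L (\<gamma>/\<beta>) v) \<partial>lborel)"
    unfolding P_def using main_P[OF beta_pos gam_pos] by simp
  have P0: "0 \<le> P" unfolding P_def by simp
  have Lr: "0 < real (L - 1)" using L_ge by simp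
  show ?thesis
  proof (intro conjI impI)
    assume h: "\<beta> < \<gamma> / real (L - 1)"
    then have "\<beta> * real (L-1) < \<gamma>" using Lr by (simp add: pos_less_divide_eq)
    then have vm: "0 < \<gamma>/\<beta> - real (L-1)" using beta_pos by (simp add: pos_less_divide_eq mult.commute)
    have I0: "0 \<le> integral {0..\<gamma>/\<beta> - real (L-1)} (g0 L (\<gamma>/\<beta>))"
      by (intro integral_nonneg integrable_continuous_interval g0_cont[OF L_ge] g0_nonneg[OF L_ge])
    have "ennreal P = ennreal (integral {0..\<gamma>/\<beta> - real (L-1)} (g0 L (\<gamma>/\<beta>)))"
      using key gv_integral[OF L_ge vm] by simp
    then have "P = integral {0..\<gamma>/\<beta> - real (L-1)} (g0 L (\<gamma>/\<beta>))" using P0 I0 by simp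
    also have "\<dots> = integral {0 .. sqrt ((\<gamma> / \<beta> - real (L - 1)) / (pi * lam))}
                  (\<lambda>r. (1 - 1 / (sqrt (\<gamma> / \<beta> - pi * lam * r^2 + (real L - 2)^2 / 4)
                                   - (real L - 2) / 2)) ^ (L - 1) * f r)"
      unfolding f_def by (rule subst_int[OF L_ge vm lam_pos, symmetric])
    finally show "P = integral {0 .. sqrt ((\<gamma> / \<beta> - real (L - 1)) / (pi * lam))}
                  (\<lambda>r. (1 - 1 / (sqrt (\<gamma> / \<beta> - pi * lam * r^2 + (real L - 2)^2 / 4)
                                   - (real L - 2) / 2)) ^ (L - 1) * f r)" .
  next
    assume h: "\<beta> \<ge> \<gamma> / real (L - 1)"
    then have "\<gamma> \<le> \<beta> * real (L-1)" using Lr by (simp add: divide_le_eq)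
    then have "\<gamma>/\<beta> - real (L-1) \<le> 0" using beta_pos by (simp add: divide_le_eq mult.commute)
    then have "ennreal P = 0" using key gv_zero by simp
    then show "P = 0" using P0 by simp
  qed
qed


end
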